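(* Let $\mathcal{H}=(V,\vec H,\bm{w})$ be a finite, loopless, strongly connected, weighted directed hypergraph with $|V|\ge2$, and let $h=(A_h,B_h)\in\vec H$ with $B_h=\{y_1,\dots,y_m\}$. Then for every $\alpha\in[0,1]$, $$\kappa_\alpha(h)\le\frac{1-\alpha}{L(h)}\left(\frac{1}{m}\sum_{j=1}^m C(y_j,\bm{w})+\mathrm{diam}(\mathcal{H})\right),$$ where $C(y_j,\bm w)$ is defined below.
   Context: A weighted directed hypergraph $(V,\vec H,\bm{w})$ has a finite vertex set $V$, a finite set $\vec H$ of hyperedges, each an ordered pair $h=(A_h,B_h)$ of nonempty subsets of $V$, and positive weights $w_h>0$. It is loopless if $A_h\cap B_h=\emptyset$ for all $h$. A directed path from $u$ to $v$ is a sequence of hyperedges $h_1,\dots,h_l$ with $u\in A_{h_1}$, $v\in B_{h_l}$ and $B_{h_j}\cap A_{h_{j+1}}\ne\emptyset$; strongly connected means a directed path exists from $u$ to $v$ for all distinct $u,v$. Quasi-distance: $d(u,v)=\inf_\gamma\sum_{h\in\gamma}w_h$ over directed paths from $u$ to $v$ ($u\neq v$), $d(u,u)=0$; $\mathrm{diam}(\mathcal{H})=\max_{u,v}d(u,v)$. $L(h)=\min_{x\in A_h,y\in B_h}d(x,y)$. $\Gamma^{in}(v)=\{z:\exists h'\text{ with }v\in B_{h'},z\in A_{h'}\}$, $\Gamma^{out}(v)=\{z:\exists h'\text{ with }v\in A_{h'},z\in B_{h'}\}$. For $h$ with $A_h=\{x_1,\dots,x_n\}$, $B_h=\{y_1,\dots,y_m\}$,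 $\alpha\in[0,1]$: $\mu^\alpha_{A_h}=\sum_i\mu^\alpha_{x_i}$ with $\mu^\alpha_{x_i}(x_i)=\alpha/n$, $\mu^\alpha_{x_i}(z)=(1-\alpha)\sum_{h':x_i\in B_{h'},z\in A_{h'}}\frac{1}{n|A_{h'}|}\frac{w_{h'}}{\sum_{h'':x_i\in B_{h''}}w_{h''}}$ for $z\in\Gamma^{in}(x_i)$, $0$ otherwise; $\mu^\alpha_{B_h}=\sum_j\mu^\alpha_{y_j}$ with $\mu^\alpha_{y_j}(y_j)=\alpha/m$, $\mu^\alpha_{y_j}(z)=(1-\alpha)\sum_{h':y_j\in A_{h'},z\in B_{h'}}\frac{1}{m|B_{h'}|}\frac{w_{h'}}{\sum_{h'':y_j\in A_{h''}}w_{h''}}$ for $z\in\Gamma^{out}(y_j)$, $0$ otherwise. $W(\mu,\nu)=\inf_\pi\sum_{u,v}\pi(u,v)d(u,v)$ over couplings $\pi$ with $\sum_v\pi(u,v)=\mu(u)$, $\sum_u\pi(u,v)=\nu(v)$. $\kappa_\alpha(h)=1-W(\mu^\alpha_{A_h},\mu^\alpha_{B_h})/L(h)$. Definition of $C$: let $d(A_h,z)=\min_{x\in A_h}d(x,z)$. For $y\in B_h$ set $\Gamma^-_y=\{z\in\Gamma^{out}(y):d(A_h,z)<d(A_h,y)\}$, $\Gamma^+_y=\{z\in\Gamma^{out}(y):d(A_h,z)>d(A_h,y)\}$; $C_1(y)=d(A_h,y)-\min_{z\in\Gamma^-_y}d(A_h,z)$ (or $0$ if $\Gamma^-_y=\emptyset$),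 $C_2(y)=\min_{z\in\Gamma^+_y}d(A_h,z)-d(A_h,y)$ (or $0$ if $\Gamma^+_y=\emptyset$), and $$C(y,\bm w)=\frac{C_1(y)\sum_{z\in\Gamma^-_y}\sum_{h':y\in A_{h'},z\in B_{h'}}\frac{w_{h'}}{|B_{h'}|}-C_2(y)\sum_{z\in\Gamma^+_y}\sum_{h':y\in A_{h'},z\in B_{h'}}\frac{w_{h'}}{|B_{h'}|}}{\sum_{h':y\in A_{h'}}w_{h'}}.$$ *)

theory Defs
  imports Complex_Main
begin

text \<open>A hyperedge is an ordered pair (A_h, B_h) of vertex sets; tail = fst, head = snd.
  A weighted directed hypergraph is (V, H, w) with H a set of such pairs and
  w a weight function on hyperedges.\<close>

type_synonym 'v hedge = "'v set \<times> 'v set"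

definition dir_hypergraph :: "'v set \<Rightarrow> 'v hedge set \<Rightarrow> ('v hedge \<Rightarrow> real) \<Rightarrow> bool" where
  "dir_hypergraph V H w \<longleftrightarrow> finite V \<and> finite H \<and>
     (\<forall>h\<in>H. fst h \<noteq> {} \<and> snd h \<noteq> {} \<and> fst h \<subseteq> V \<and> snd h \<subseteq> V \<and> w h > 0)"

definition loopless :: "'v hedge set \<Rightarrow> bool" where
  "loopless H \<longleftrightarrow> (\<forall>h\<in>H. fst h \<inter> snd h = {})"

definition is_dpath :: "'v hedge set \<Rightarrow> 'v \<Rightarrow> 'v \<Rightarrow> 'v hedge list \<Rightarrow> bool" where
  "is_dpath H u v \<gamma> \<longleftrightarrow> \<gamma> \<noteq> [] \<and> set \<gamma> \<subseteq> H \<and> u \<in> fst (hd \<gamma>) \<and> v \<in> snd (last \<gamma>) \<and>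
     (\<forall>j. Suc j < length \<gamma> \<longrightarrow> snd (\<gamma> ! j) \<inter> fst (\<gamma> ! Suc j) \<noteq> {})"

definition strongly_connected :: "'v set \<Rightarrow> 'v hedge set \<Rightarrow> bool" where
  "strongly_connected V H \<longleftrightarrow> (\<forall>u\<in>V. \<forall>v\<in>V. u \<noteq> v \<longrightarrow> (\<exists>\<gamma>. is_dpath H u v \<gamma>))"

definition qdist :: "'v hedge set \<Rightarrow> ('v hedge \<Rightarrow> real) \<Rightarrow> 'v \<Rightarrow> 'v \<Rightarrow> real" where
  "qdist H w u v = (if u = v then 0
     else Inf {sum_list (map w \<gamma>) | \<gamma>. is_dpath H u v \<gamma>})"

definition diam :: "'v set \<Rightarrow> 'v hedge set \<Rightarrow> ('v hedge \<Rightarrow> real) \<Rightarrow> real" where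
  "diam V H w = Max {qdist H w u v | u v. u \<in> V \<and> v \<in> V}"

definition Lh :: "'v hedge set \<Rightarrow> ('v hedge \<Rightarrow> real) \<Rightarrow> 'v hedge \<Rightarrow> real" where
  "Lh H w h = Min {qdist H w x y | x y. x \<in> fst h \<and> y \<in> snd h}"

definition Gamma_in :: "'v hedge set \<Rightarrow> 'v \<Rightarrow> 'v set" where
  "Gamma_in H v = {z. \<exists>h'\<in>H. v \<in> snd h' \<and> z \<in> fst h'}"

definition Gamma_out :: "'v hedge set \<Rightarrow> 'v \<Rightarrow> 'v set" where
  "Gamma_out H v = {z. \<exists>h'\<in>H. v \<in> fst h' \<and> z \<in> snd h'}"

definition mu_tail_vertex :: "'v hedge set \<Rightarrow> ('v hedge \<Rightarrow> real) \<Rightarrow> real \<Rightarrow> nat \<Rightarrow> 'v \<Rightarrow> 'v \<Rightarrow> real" where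
  "mu_tail_vertex H w \<alpha> n x z =
     (if z = x then \<alpha> / real n
      else if z \<in> Gamma_in H x then
        (1 - \<alpha>) * (\<Sum>h'\<in>{h'\<in>H. x \<in> snd h' \<and> z \<in> fst h'}.
            (1 / (real n * real (card (fst h')))) *
            (w h' / (\<Sum>h''\<in>{h''\<in>H. x \<in> snd h''}. w h'')))
      else 0)"

definition mu_tail :: "'v hedge set \<Rightarrow> ('v hedge \<Rightarrow> real) \<Rightarrow> real \<Rightarrow> 'v hedge \<Rightarrow> 'v \<Rightarrow> real" where
  "mu_tail H w \<alpha> h z = (\<Sum>x\<in>fst h. mu_tail_vertex H w \<alpha> (card (fst h)) x z)"

definition mu_head_vertex :: "'v hedge set \<Rightarrow> ('v hedge \<Rightarrow> real) \<Rightarrow> real \<Rightarrow> nat \<Rightarrow> 'v \<Rightarrow> 'v \<Rightarrow> real" where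
  "mu_head_vertex H w \<alpha> m y z =
     (if z = y then \<alpha> / real m
      else if z \<in> Gamma_out H y then
        (1 - \<alpha>) * (\<Sum>h'\<in>{h'\<in>H. y \<in> fst h' \<and> z \<in> snd h'}.
            (1 / (real m * real (card (snd h')))) *
            (w h' / (\<Sum>h''\<in>{h''\<in>H. y \<in> fst h''}. w h'')))
      else 0)"

definition mu_head :: "'v hedge set \<Rightarrow> ('v hedge \<Rightarrow> real) \<Rightarrow> real \<Rightarrow> 'v hedge \<Rightarrow> 'v \<Rightarrow> real" where
  "mu_head H w \<alpha> h z = (\<Sum>y\<in>snd h. mu_head_vertex H w \<alpha> (card (snd h)) y z)"

definition coupling :: "'v set \<Rightarrow> ('v \<Rightarrow> real) \<Rightarrow> ('v \<Rightarrow> real) \<Rightarrow> ('v \<Rightarrow> 'v \<Rightarrow> real) \<Rightarrow> bool" where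
  "coupling V \<mu> \<nu> \<pi> \<longleftrightarrow>
     (\<forall>u\<in>V. \<forall>v\<in>V. \<pi> u v \<ge> 0) \<and>
     (\<forall>u\<in>V. (\<Sum>v\<in>V. \<pi> u v) = \<mu> u) \<and>
     (\<forall>v\<in>V. (\<Sum>u\<in>V. \<pi> u v) = \<nu> v)"

definition wasserstein :: "'v set \<Rightarrow> 'v hedge set \<Rightarrow> ('v hedge \<Rightarrow> real) \<Rightarrow> ('v \<Rightarrow> real) \<Rightarrow> ('v \<Rightarrow> real) \<Rightarrow> real" where
  "wasserstein V H w \<mu> \<nu> =
     Inf {(\<Sum>u\<in>V. \<Sum>v\<in>V. \<pi> u v * qdist H w u v) | \<pi>. coupling V \<mu> \<nu> \<pi>}"

definition kappa :: "'v set \<Rightarrow> 'v hedge set \<Rightarrow> ('v hedge \<Rightarrow> real) \<Rightarrow> real \<Rightarrow> 'v hedge \<Rightarrow> real" where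
  "kappa V H w \<alpha> h = 1 - wasserstein V H w (mu_tail H w \<alpha> h) (mu_head H w \<alpha> h) / Lh H w h"

definition distA :: "'v hedge set \<Rightarrow> ('v hedge \<Rightarrow> real) \<Rightarrow> 'v hedge \<Rightarrow> 'v \<Rightarrow> real" where
  "distA H w h z = Min {qdist H w x z | x. x \<in> fst h}"

definition Gamma_minus :: "'v hedge set \<Rightarrow> ('v hedge \<Rightarrow> real) \<Rightarrow> 'v hedge \<Rightarrow> 'v \<Rightarrow> 'v set" where
  "Gamma_minus H w h y = {z \<in> Gamma_out H y. distA H w h z < distA H w h y}"

definition Gamma_plus :: "'v hedge set \<Rightarrow> ('v hedge \<Rightarrow> real) \<Rightarrow> 'v hedge \<Rightarrow> 'v \<Rightarrow> 'v set" where
  "Gamma_plus H w h y = {z \<in> Gamma_out H y. distA H w h z > distA H w h y}"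

definition C1 :: "'v hedge set \<Rightarrow> ('v hedge \<Rightarrow> real) \<Rightarrow> 'v hedge \<Rightarrow> 'v \<Rightarrow> real" where
  "C1 H w h y = (if Gamma_minus H w h y = {} then 0
     else distA H w h y - Min (distA H w h ` Gamma_minus H w h y))"

definition C2 :: "'v hedge set \<Rightarrow> ('v hedge \<Rightarrow> real) \<Rightarrow> 'v hedge \<Rightarrow> 'v \<Rightarrow> real" where
  "C2 H w h y = (if Gamma_plus H w h y = {} then 0
     else Min (distA H w h ` Gamma_plus H w h y) - distA H w h y)"

definition Cw :: "'v hedge set \<Rightarrow> ('v hedge \<Rightarrow> real) \<Rightarrow> 'v hedge \<Rightarrow> 'v \<Rightarrow> real" where
  "Cw H w h y =
     (C1 H w h y * (\<Sum>z\<in>Gamma_minus H w h y. \<Sum>h'\<in>{h'\<in>H. y \<in> fst h' \<and> z \<in> snd h'}. w h' / real (card (snd h')))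
      - C2 H w h y * (\<Sum>z\<in>Gamma_plus H w h y. \<Sum>h'\<in>{h'\<in>H. y \<in> fst h' \<and> z \<in> snd h'}. w h' / real (card (snd h'))))
     / (\<Sum>h'\<in>{h'\<in>H. y \<in> fst h'}. w h')"

end

theory Submission
  imports Defs
begin


lemma gen_swap:
  fixes S T :: "'h \<Rightarrow> 'v set" and c :: "'h \<Rightarrow> real"
  assumes finV: "finite V" and finH: "finite H"
    and TV: "\<And>h'. h' \<in> H \<Longrightarrow> T h' \<subseteq> V"
  shows "(\<Sum>z\<in>V. (\<Sum>h'\<in>{h'\<in>H. x \<in> S h' \<and> z \<in> T h'}. c h') * g z)
       = (\<Sum>h'\<in>{h'\<in>H. x \<in> S h'}. c h' * (\<Sum>z\<in>T h'. g z))"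
proof -
  have "(\<Sum>z\<in>V. (\<Sum>h'\<in>{h'\<in>H. x \<in> S h' \<and> z \<in> T h'}. c h') * g z)
     = (\<Sum>z\<in>V. \<Sum>h'\<in>{h'. h' \<in> {h'\<in>H. x \<in> S h'} \<and> z \<in> T h'}. c h' * g z)"
    by (rule sum.cong) (auto simp: sum_distrib_right intro!: sum.cong)
  also have "\<dots> = (\<Sum>h'\<in>{h'\<in>H. x \<in> S h'}. \<Sum>z\<in>{z. z \<in> V \<and> z \<in> T h'}. c h' * g z)"
    by (rule sum.swap_restrict[symmetric]) (use finV finH in auto)
  also have "\<dots> = (\<Sum>h'\<in>{h'\<in>H. x \<in> S h'}. c h' * (\<Sum>z\<in>T h'. g z))"
  proof (rule sum.cong)
    fix h' assume "h' \<in> {h'\<in>H. x \<in> S h'}"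
    then have "{z. z \<in> V \<and> z \<in> T h'} = T h'" using TV by auto
    then show "(\<Sum>z\<in>{z. z \<in> V \<and> z \<in> T h'}. c h' * g z) = c h' * (\<Sum>z\<in>T h'. g z)"
      by (simp add: sum_distrib_left)
  qed simp
  finally show ?thesis .
qed

lemma gen_vertex:
  fixes \<mu> :: "'v \<Rightarrow> real" and S T :: "'h \<Rightarrow> 'v set" and w :: "'h \<Rightarrow> real"
  assumes finV: "finite V" and finH: "finite H"
    and loop: "\<And>h'. h' \<in> H \<Longrightarrow> x \<in> S h' \<Longrightarrow> x \<notin> T h'"
    and xV: "x \<in> V"
    and mu: "\<And>z. \<mu> z = (if z = x then a else if z \<in> {z. \<exists>h'\<in>H. x \<in> S h' \<and> z \<in> T h'} then
        b * (\<Sum>h'\<in>{h'\<in>H. x \<in> S h' \<and> z \<in> T h'}. (1 / (k * real (card (T h')))) * (w h' / W)) else 0)"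
  shows "(\<Sum>z\<in>V. \<mu> z * g z) = a * g x + b / (k * W) *
     (\<Sum>z\<in>V. (\<Sum>h'\<in>{h'\<in>H. x \<in> S h' \<and> z \<in> T h'}. w h' / real (card (T h'))) * g z)"
proof -
  define q where "q = (\<lambda>z. \<Sum>h'\<in>{h'\<in>H. x \<in> S h' \<and> z \<in> T h'}. w h' / real (card (T h')))"
  have qx: "q x = 0"
  proof -
    have "{h'\<in>H. x \<in> S h' \<and> x \<in> T h'} = {}" using loop by auto
    then show ?thesis unfolding q_def by (metis sum.empty)
  qed
  have mu': "\<mu> z = (if z = x then a else b / (k * W) * q z)" for z
  proof (cases "z = x")
    case True thus ?thesis using mu by simp
  next
    case False
    show ?thesis
    proof (cases "z \<in> {z. \<exists>h'\<in>H. x \<in> S h' \<and> z \<in> T h'}")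
      case True
      then have "\<mu> z = b * (\<Sum>h'\<in>{h'\<in>H. x \<in> S h' \<and> z \<in> T h'}. (1 / (k * real (card (T h')))) * (w h' / W))"
        using mu False by simp
      also have "\<dots> = b / (k * W) * q z" unfolding q_def sum_distrib_left
        by (rule sum.cong) (simp_all add: divide_inverse mult_ac inverse_mult_distrib)
      finally show ?thesis using False by simp
    next
      case False2: False
      then have "{h'\<in>H. x \<in> S h' \<and> z \<in> T h'} = {}" by auto
      then have "q z = 0" unfolding q_def by (metis sum.empty)
      then show ?thesis using mu[of z] False False2 by auto
    qed
  qed
  have "(\<Sum>z\<in>V. \<mu> z * g z) = \<mu> x * g x + (\<Sum>z\<in>V-{x}. \<mu> z * g z)"
    by (rule sum.remove[OF finV xV])
  also have "(\<Sum>z\<in>V-{x}. \<mu> z * g z) = (\<Sum>z\<in>V-{x}. b / (k * W) * (q z * g z))"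
    by (rule sum.cong) (auto simp: mu')
  also have "\<dots> = b / (k * W) * (\<Sum>z\<in>V-{x}. q z * g z)" by (simp add: sum_distrib_left)
  also have "(\<Sum>z\<in>V-{x}. q z * g z) = (\<Sum>z\<in>V. q z * g z)"
    using sum.remove[OF finV xV, of "\<lambda>z. q z * g z"] qx by simp
  finally show ?thesis using mu' unfolding q_def by simp
qed



lemma dpath_append:
  assumes "is_dpath H x u g1" "is_dpath H u v g2"
  shows "is_dpath H x v (g1 @ g2)"
  unfolding is_dpath_def
proof (intro conjI allI impI)
  have g1: "g1 \<noteq> []" "set g1 \<subseteq> H" "x \<in> fst (hd g1)" "u \<in> snd (last g1)"
    "\<And>j. Suc j < length g1 \<Longrightarrow> snd (g1 ! j) \<inter> fst (g1 ! Suc j) \<noteq> {}"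
    using assms(1) unfolding is_dpath_def by auto
  have g2: "g2 \<noteq> []" "set g2 \<subseteq> H" "u \<in> fst (hd g2)" "v \<in> snd (last g2)"
    "\<And>j. Suc j < length g2 \<Longrightarrow> snd (g2 ! j) \<inter> fst (g2 ! Suc j) \<noteq> {}"
    using assms(2) unfolding is_dpath_def by auto
  show "g1 @ g2 \<noteq> []" using g1 by simp
  show "set (g1 @ g2) \<subseteq> H" using g1 g2 by simp
  show "x \<in> fst (hd (g1 @ g2))" using g1 by simp
  show "v \<in> snd (last (g1 @ g2))" using g2 by simp
  fix j assume j: "Suc j < length (g1 @ g2)"
  show "snd ((g1 @ g2) ! j) \<inter> fst ((g1 @ g2) ! Suc j) \<noteq> {}"
  proof (cases "Suc j < length g1")
    case True thus ?thesis using g1(5)[OF True] by (simp add: nth_append)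
  next
    case False
    show ?thesis
    proof (cases "Suc j = length g1")
      case True
      then have jj: "j = length g1 - 1" by simp
      then have "(g1 @ g2) ! j = last g1" using g1(1) True by (simp add: nth_append last_conv_nth)
      moreover have "(g1 @ g2) ! Suc j = hd g2" using True g2(1) by (simp add: nth_append hd_conv_nth)
      ultimately show ?thesis using g1(4) g2(3) by auto
    next
      case False2: False
      with False have jl: "length g1 \<le> j" by simp
      then have e: "Suc j - length g1 = Suc (j - length g1)" by simp
      have "Suc (j - length g1) < length g2" using j jl by simp
      from g2(5)[OF this] show ?thesis using jl e by (simp add: nth_append)
    qed
  qed
qed

lemma sl_nonneg:
  fixes w :: "'a \<Rightarrow> real"
  shows "set r \<subseteq> H \<Longrightarrow> \<forall>h\<in>H. w h > 0 \<Longrightarrow> 0 \<le> sum_list (map w r)"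
proof (induction r)
  case (Cons a r)
  then have "w a > 0" by simp
  moreover have "0 \<le> sum_list (map w r)" using Cons by simp
  ultimately show ?case by simp
qed simp

lemma path_sum_ge:
  fixes w :: "'v hedge \<Rightarrow> real"
  assumes "finite H" "\<forall>h\<in>H. w h > 0" "is_dpath H u v g"
  shows "sum_list (map w g) \<ge> Min (w ` H)"
proof -
  obtain a r where g: "g = a # r" using assms(3) unfolding is_dpath_def by (cases g) auto
  have aH: "a \<in> H" "set r \<subseteq> H" using assms(3) g unfolding is_dpath_def by auto
  have "Min (w ` H) \<le> w a" using aH assms(1) by simp
  moreover have "sum_list (map w r) \<ge> 0"  using sl_nonneg[OF aH(2)] assms(2) by blast
  ultimately show ?thesis using g by simp
qed

lemma path_sum_nonneg:
  fixes w :: "'v hedge \<Rightarrow> real"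
  assumes "\<forall>h\<in>H. w h > 0" "is_dpath H u v g"
  shows "sum_list (map w g) \<ge> 0"
  using assms(2) unfolding is_dpath_def by (intro sl_nonneg[OF _ assms(1)]) simp

lemma qdist_pos:
  assumes "finite H" "\<forall>h\<in>H. w h > 0" "u \<noteq> v" "\<exists>g. is_dpath H u v g"
  shows "qdist H w u v > 0"
proof -
  obtain g where g: "is_dpath H u v g" using assms(4) by blast
  then have "H \<noteq> {}" unfolding is_dpath_def by (cases g) auto
  then have pos: "Min (w ` H) > 0" using assms(1,2) by simp
  have "Min (w ` H) \<le> Inf {sum_list (map w \<gamma>) | \<gamma>. is_dpath H u v \<gamma>}"
    by (rule cInf_greatest) (use g path_sum_ge[OF assms(1,2)] in auto)
  then show ?thesis using pos assms(3) unfolding qdist_def by simp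
qed

lemma qdist_nonneg:
  assumes "finite H" "\<forall>h\<in>H. w h > 0" "u \<noteq> v \<longrightarrow> (\<exists>g. is_dpath H u v g)"
  shows "qdist H w u v \<ge> 0"
  using qdist_pos[OF assms(1,2)] assms(3) by (cases "u = v") (auto simp: qdist_def less_imp_le)

lemma qdist_le:
  assumes "\<forall>h\<in>H. w h > 0" "u \<noteq> v" "is_dpath H u v g"
  shows "qdist H w u v \<le> sum_list (map w g)"
proof -
  have "Inf {sum_list (map w \<gamma>) | \<gamma>. is_dpath H u v \<gamma>} \<le> sum_list (map w g)"
    by (rule cInf_lower) (use assms path_sum_nonneg[OF assms(1)] in \<open>auto intro: bdd_belowI[where m=0]\<close>)
  then show ?thesis using assms(2) unfolding qdist_def by simp
qed

lemma qdist_triangle: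
  assumes fin: "finite H" and wp: "\<forall>h\<in>H. w h > 0"
    and conn: "\<And>a b. a \<in> V \<Longrightarrow> b \<in> V \<Longrightarrow> a \<noteq> b \<Longrightarrow> \<exists>g. is_dpath H a b g"
    and V: "x \<in> V" "u \<in> V" "v \<in> V"
  shows "qdist H w x v \<le> qdist H w x u + qdist H w u v"
proof -
  have nn: "qdist H w a b \<ge> 0" if "a \<in> V" "b \<in> V" for a b
    using qdist_nonneg[OF fin wp] conn that by blast
  show ?thesis
  proof (cases "x = v \<or> x = u \<or> u = v")
    case True
    have z: "qdist H w a a = 0" for a by (simp add: qdist_def)
    have n1: "qdist H w x u \<ge> 0" "qdist H w u v \<ge> 0" using nn V by auto
    show ?thesis
    proof (cases "x = v")
      case True then show ?thesis using z n1 by simp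
    next
      case False
      then have "x = u \<or> u = v" using \<open>x = v \<or> x = u \<or> u = v\<close> by simp
      then show ?thesis using z n1 by (elim disjE) simp_all
    qed
  next
    case False
    then have d: "x \<noteq> v" "x \<noteq> u" "u \<noteq> v" by auto
    obtain g1 where g1: "is_dpath H x u g1" using conn V d by blast
    obtain g2 where g2: "is_dpath H u v g2" using conn V d by blast
    have key: "qdist H w x v - sum_list (map w b) \<le> sum_list (map w a)"
      if "is_dpath H x u a" "is_dpath H u v b" for a b
      using qdist_le[OF wp d(1) dpath_append[OF that]] by simp
    have s1: "qdist H w x v - sum_list (map w b) \<le> qdist H w x u" if "is_dpath H u v b" for b
    proof -
      have "qdist H w x v - sum_list (map w b) \<le> Inf {sum_list (map w \<gamma>) | \<gamma>. is_dpath H x u \<gamma>}"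
        by (rule cInf_greatest) (use g1 key that in auto)
      then show ?thesis using d unfolding qdist_def by simp
    qed
    have "qdist H w x v - qdist H w x u \<le> Inf {sum_list (map w \<gamma>) | \<gamma>. is_dpath H u v \<gamma>}"
      by (rule cInf_greatest) (use g2 s1 in fastforce)+
    then show ?thesis using d unfolding qdist_def by simp
  qed
qed



lemma gen_form:
  fixes \<mu> :: "'v \<Rightarrow> real" and S T :: "'h \<Rightarrow> 'v set" and w :: "'h \<Rightarrow> real"
  assumes loop: "\<And>h'. h' \<in> H \<Longrightarrow> x \<in> S h' \<Longrightarrow> x \<notin> T h'"
    and mu: "\<And>z. \<mu> z = (if z = x then a else if z \<in> {z. \<exists>h'\<in>H. x \<in> S h' \<and> z \<in> T h'} then
        b * (\<Sum>h'\<in>{h'\<in>H. x \<in> S h' \<and> z \<in> T h'}. (1 / (k * real (card (T h')))) * (w h' / W)) else 0)"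
  shows "\<mu> z = (if z = x then a else b / (k * W) * (\<Sum>h'\<in>{h'\<in>H. x \<in> S h' \<and> z \<in> T h'}. w h' / real (card (T h'))))"
proof -
  define q where "q = (\<lambda>z. \<Sum>h'\<in>{h'\<in>H. x \<in> S h' \<and> z \<in> T h'}. w h' / real (card (T h')))"
  have "\<mu> z = (if z = x then a else b / (k * W) * q z)"
  proof (cases "z = x")
    case True thus ?thesis using mu by simp
  next
    case False
    show ?thesis
    proof (cases "z \<in> {z. \<exists>h'\<in>H. x \<in> S h' \<and> z \<in> T h'}")
      case True
      then have "\<mu> z = b * (\<Sum>h'\<in>{h'\<in>H. x \<in> S h' \<and> z \<in> T h'}. (1 / (k * real (card (T h')))) * (w h' / W))"
        using mu False by simp
      also have "\<dots> = b / (k * W) * q z" unfolding q_def sum_distrib_left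
        by (rule sum.cong) (simp_all add: divide_inverse mult_ac inverse_mult_distrib)
      finally show ?thesis using False by simp
    next
      case False2: False
      then have "{h'\<in>H. x \<in> S h' \<and> z \<in> T h'} = {}" by auto
      then have "q z = 0" unfolding q_def by (metis sum.empty)
      then show ?thesis using mu[of z] False False2 by auto
    qed
  qed
  then show ?thesis unfolding q_def .
qed

lemma gen_mass:
  fixes S T :: "'h \<Rightarrow> 'v set" and w :: "'h \<Rightarrow> real"
  assumes finV: "finite V" and finH: "finite H"
    and TV: "\<And>h'. h' \<in> H \<Longrightarrow> T h' \<subseteq> V \<and> T h' \<noteq> {}"
  shows "(\<Sum>z\<in>V. (\<Sum>h'\<in>{h'\<in>H. x \<in> S h' \<and> z \<in> T h'}. w h' / real (card (T h')))) 
       = (\<Sum>h'\<in>{h'\<in>H. x \<in> S h'}. w h')"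
proof -
  have "(\<Sum>z\<in>V. (\<Sum>h'\<in>{h'\<in>H. x \<in> S h' \<and> z \<in> T h'}. w h' / real (card (T h')))) 
     = (\<Sum>z\<in>V. (\<Sum>h'\<in>{h'\<in>H. x \<in> S h' \<and> z \<in> T h'}. w h' / real (card (T h'))) * (\<lambda>_. 1) z)"
    by simp
  also have "\<dots> = (\<Sum>h'\<in>{h'\<in>H. x \<in> S h'}. w h' / real (card (T h')) * (\<Sum>z\<in>T h'. (\<lambda>_. 1::real) z))"
    by (rule gen_swap[OF finV finH]) (use TV in auto)
  also have "\<dots> = (\<Sum>h'\<in>{h'\<in>H. x \<in> S h'}. w h')"
  proof (rule sum.cong)
    fix h' assume "h' \<in> {h'\<in>H. x \<in> S h'}"
    then have "T h' \<subseteq> V" "T h' \<noteq> {}" using TV by auto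
    then have "card (T h') > 0" using finV by (meson card_gt_0_iff finite_subset)
    then show "w h' / real (card (T h')) * (\<Sum>z\<in>T h'. (\<lambda>_. 1::real) z) = w h'" by simp
  qed simp
  finally show ?thesis .
qed


theorem mainTheorem6:
  fixes V :: "'v set" and H :: "'v hedge set" and w :: "'v hedge \<Rightarrow> real"
    and h :: "'v hedge" and \<alpha> :: real
  assumes "dir_hypergraph V H w"
    and "loopless H"
    and "strongly_connected V H"
    and "card V \<ge> 2"
    and "h \<in> H"
    and "0 \<le> \<alpha>" and "\<alpha> \<le> 1"
  shows "kappa V H w \<alpha> h \<le>
    (1 - \<alpha>) / Lh H w h *
      ((1 / real (card (snd h))) * (\<Sum>y\<in>snd h. Cw H w h y) + diam V H w)"
proof -
  note hyp = assms(1)[unfolded dir_hypergraph_def]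
  have finV: "finite V" and finH: "finite H" and wp: "\<forall>h'\<in>H. w h' > 0"
    using hyp by auto
  have sub: "\<And>h'. h' \<in> H \<Longrightarrow> fst h' \<subseteq> V \<and> snd h' \<subseteq> V \<and> fst h' \<noteq> {} \<and> snd h' \<noteq> {}"
    using hyp by auto
  have loop: "\<And>h'. h' \<in> H \<Longrightarrow> fst h' \<inter> snd h' = {}" using assms(2) unfolding loopless_def by auto
  have conn: "\<And>a b. a \<in> V \<Longrightarrow> b \<in> V \<Longrightarrow> a \<noteq> b \<Longrightarrow> \<exists>g. is_dpath H a b g"
    using assms(3) unfolding strongly_connected_def by auto
  define A where "A = fst h"
  define B where "B = snd h"
  define n where "n = card A"
  define m where "m = card B"
  define D where "D = qdist H w"
  define f where "f = distA H w h"
  have AV: "A \<subseteq> V" "A \<noteq> {}" and BV: "B \<subseteq> V" "B \<noteq> {}"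
    using sub[OF assms(5)] unfolding A_def B_def by auto
  have finA: "finite A" and finB: "finite B" using AV BV finV finite_subset by auto
  have npos: "n > 0" and mpos: "m > 0" using finA finB AV BV n_def m_def by auto
  have AB: "A \<inter> B = {}" using loop[OF assms(5)] unfolding A_def B_def .
  have Dnn: "\<And>a b. a \<in> V \<Longrightarrow> b \<in> V \<Longrightarrow> D a b \<ge> 0"
    unfolding D_def using qdist_nonneg[OF finH wp] conn by blast
  have Dtri: "\<And>x u v. x \<in> V \<Longrightarrow> u \<in> V \<Longrightarrow> v \<in> V \<Longrightarrow> D x v \<le> D x u + D u v"
    unfolding D_def by (rule qdist_triangle[OF finH wp conn]) auto
  have Dpos: "\<And>a b. a \<in> V \<Longrightarrow> b \<in> V \<Longrightarrow> a \<noteq> b \<Longrightarrow> D a b > 0"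
    unfolding D_def using qdist_pos[OF finH wp] conn by blast
  have D0: "\<And>a. D a a = 0" unfolding D_def qdist_def by simp
  have fdef: "\<And>z. f z = Min ((\<lambda>x. D x z) ` A)"
  proof -
    fix z
    have "{qdist H w x z | x. x \<in> fst h} = (\<lambda>x. D x z) ` A" unfolding D_def A_def by auto
    then show "f z = Min ((\<lambda>x. D x z) ` A)" unfolding f_def distA_def by simp
  qed
  have f_att: "\<And>z. \<exists>x\<in>A. f z = D x z"
    using fdef Min_in[of "(\<lambda>x. D x _) ` A"] finA AV(2) by fastforce
  have f_le: "\<And>x z. x \<in> A \<Longrightarrow> f z \<le> D x z"
    using fdef finA by simp
  have f_nn: "\<And>z. z \<in> V \<Longrightarrow> f z \<ge> 0"
    using f_att Dnn AV(1) by (metis subsetD)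
  have fA: "\<And>x. x \<in> A \<Longrightarrow> f x = 0"
    using f_le[of _ _] D0 f_nn AV(1) by (metis order_antisym subsetD)
  define dm where "dm = diam V H w"
  have dmset: "{qdist H w u v | u v. u \<in> V \<and> v \<in> V} = (\<lambda>(u,v). D u v) ` (V \<times> V)"
    unfolding D_def by auto
  have Dle_dm: "\<And>a b. a \<in> V \<Longrightarrow> b \<in> V \<Longrightarrow> D a b \<le> dm"
    unfolding dm_def diam_def dmset using finV by (intro Max_ge) auto
  have f_dm: "\<And>z. z \<in> V \<Longrightarrow> f z \<le> dm"
    using f_att Dle_dm AV(1) by (metis subsetD)
  have dm_nn: "dm \<ge> 0" using Dle_dm[of "SOME x. x \<in> A" "SOME x. x \<in> A"] D0 AV
    by (metis some_in_eq subsetD)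
  have f_lip: "\<And>u v. u \<in> V \<Longrightarrow> v \<in> V \<Longrightarrow> f v - f u \<le> D u v"
  proof -
    fix u v assume uv: "u \<in> V" "v \<in> V"
    obtain x where x: "x \<in> A" "f u = D x u" using f_att by blast
    have "f v \<le> D x v" using f_le x by blast
    also have "\<dots> \<le> D x u + D u v" using Dtri x AV uv by blast
    finally show "f v - f u \<le> D u v" using x by simp
  qed
  define L where "L = Lh H w h"
  have Lset: "{qdist H w x y | x y. x \<in> fst h \<and> y \<in> snd h} = (\<lambda>(x,y). D x y) ` (A \<times> B)"
    unfolding D_def A_def B_def by auto
  have L_le: "\<And>y. y \<in> B \<Longrightarrow> L \<le> f y"
  proof -
    fix y assume y: "y \<in> B"
    obtain x where x: "x \<in> A" "f y = D x y" using f_att by blast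
    have "L \<le> D x y" unfolding L_def Lh_def Lset using finA finB x y by (intro Min_le) auto
    then show "L \<le> f y" using x by simp
  qed
  have Lpos: "L > 0"
  proof -
    have "L \<in> (\<lambda>(x,y). D x y) ` (A \<times> B)" unfolding L_def Lh_def Lset
      using finA finB AV BV by (intro Min_in) auto
    then obtain x y where "x \<in> A" "y \<in> B" "L = D x y" by auto
    then show ?thesis using Dpos AB AV BV by blast
  qed
  have ex_other: "\<exists>u\<in>V. u \<noteq> x" if x: "x \<in> V" for x
  proof (rule ccontr)
    assume "\<not> (\<exists>u\<in>V. u \<noteq> x)"
    then have "V = {x}" using x by blast
    then show False using assms(4) by simp
  qed
  have inedge: "\<And>x. x \<in> V \<Longrightarrow> \<exists>h'\<in>H. x \<in> snd h'"
  proof -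
    fix x assume x: "x \<in> V"
    obtain u where u: "u \<in> V" "u \<noteq> x" using ex_other[OF x] by blast
    obtain g where g: "is_dpath H u x g" using conn[OF u(1) x] u by metis
    then show "\<exists>h'\<in>H. x \<in> snd h'" unfolding is_dpath_def by (metis last_in_set subsetD)
  qed
  have outedge: "\<And>x. x \<in> V \<Longrightarrow> \<exists>h'\<in>H. x \<in> fst h'"
  proof -
    fix x assume x: "x \<in> V"
    obtain u where u: "u \<in> V" "u \<noteq> x" using ex_other[OF x] by blast
    obtain g where g: "is_dpath H x u g" using conn[OF x u(1)] u by metis
    then show "\<exists>h'\<in>H. x \<in> fst h'" unfolding is_dpath_def by (metis hd_in_set subsetD)
  qed
  define Wi where "Wi = (\<lambda>x. \<Sum>h''\<in>{h''\<in>H. x \<in> snd h''}. w h'')"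
  define Wo where "Wo = (\<lambda>x. \<Sum>h''\<in>{h''\<in>H. x \<in> fst h''}. w h'')"
  define qi where "qi = (\<lambda>x z. \<Sum>h'\<in>{h'\<in>H. x \<in> snd h' \<and> z \<in> fst h'}. w h' / real (card (fst h')))"
  define qo where "qo = (\<lambda>x z. \<Sum>h'\<in>{h'\<in>H. x \<in> fst h' \<and> z \<in> snd h'}. w h' / real (card (snd h')))"
  have Wi_pos: "\<And>x. x \<in> V \<Longrightarrow> Wi x > 0"
  proof -
    fix x assume "x \<in> V"
    then obtain h' where "h' \<in> H" "x \<in> snd h'" using inedge by blast
    then have ne: "{h''\<in>H. x \<in> snd h''} \<noteq> {}" by blast
    show "Wi x > 0" unfolding Wi_def using finH wp by (intro sum_pos[OF _ ne]) auto
  qed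
  have Wo_pos: "\<And>x. x \<in> V \<Longrightarrow> Wo x > 0"
  proof -
    fix x assume "x \<in> V"
    then obtain h' where "h' \<in> H" "x \<in> fst h'" using outedge by blast
    then have ne: "{h''\<in>H. x \<in> fst h''} \<noteq> {}" by blast
    show "Wo x > 0" unfolding Wo_def using finH wp by (intro sum_pos[OF _ ne]) auto
  qed
  have qi_nn: "\<And>x z. qi x z \<ge> 0" unfolding qi_def using wp by (intro sum_nonneg) (auto intro: less_imp_le)
  have qo_nn: "\<And>x z. qo x z \<ge> 0" unfolding qo_def using wp by (intro sum_nonneg) (auto intro: less_imp_le)
  have qi_mass: "\<And>x. (\<Sum>z\<in>V. qi x z) = Wi x"
    unfolding qi_def Wi_def by (rule gen_mass[OF finV finH]) (use sub in auto)
  have qo_mass: "\<And>x. (\<Sum>z\<in>V. qo x z) = Wo x"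
    unfolding qo_def Wo_def by (rule gen_mass[OF finV finH]) (use sub in auto)
  have tdef: "\<And>x z. mu_tail_vertex H w \<alpha> n x z = (if z = x then \<alpha> / real n else if z \<in> {z. \<exists>h'\<in>H. x \<in> snd h' \<and> z \<in> fst h'} then
        (1 - \<alpha>) * (\<Sum>h'\<in>{h'\<in>H. x \<in> snd h' \<and> z \<in> fst h'}. (1 / (real n * real (card (fst h')))) * (w h' / Wi x)) else 0)"
    unfolding mu_tail_vertex_def Gamma_in_def Wi_def by (rule refl)
  have hdef: "\<And>x z. mu_head_vertex H w \<alpha> m x z = (if z = x then \<alpha> / real m else if z \<in> {z. \<exists>h'\<in>H. x \<in> fst h' \<and> z \<in> snd h'} then
        (1 - \<alpha>) * (\<Sum>h'\<in>{h'\<in>H. x \<in> fst h' \<and> z \<in> snd h'}. (1 / (real m * real (card (snd h')))) * (w h' / Wo x)) else 0)"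
    unfolding mu_head_vertex_def Gamma_out_def Wo_def by (rule refl)
  have loop1: "\<And>x h'. h' \<in> H \<Longrightarrow> x \<in> snd h' \<Longrightarrow> x \<notin> fst h'" using loop by blast
  have loop2: "\<And>x h'. h' \<in> H \<Longrightarrow> x \<in> fst h' \<Longrightarrow> x \<notin> snd h'" using loop by blast
  have tform: "\<And>x z. mu_tail_vertex H w \<alpha> n x z = (if z = x then \<alpha> / real n else (1 - \<alpha>) / (real n * Wi x) * qi x z)"
    unfolding qi_def by (rule gen_form[OF loop1 tdef])
  have hform: "\<And>x z. mu_head_vertex H w \<alpha> m x z = (if z = x then \<alpha> / real m else (1 - \<alpha>) / (real m * Wo x) * qo x z)"
    unfolding qo_def by (rule gen_form[OF loop2 hdef])
  have tsum: "\<And>x g. x \<in> V \<Longrightarrow> (\<Sum>z\<in>V. mu_tail_vertex H w \<alpha> n x z * g z) = \<alpha> / real n * g x + (1 - \<alpha>) / (real n * Wi x) * (\<Sum>z\<in>V. qi x z * g z)"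
    unfolding qi_def by (rule gen_vertex[OF finV finH loop1 _ tdef])
  have hsum: "\<And>x g. x \<in> V \<Longrightarrow> (\<Sum>z\<in>V. mu_head_vertex H w \<alpha> m x z * g z) = \<alpha> / real m * g x + (1 - \<alpha>) / (real m * Wo x) * (\<Sum>z\<in>V. qo x z * g z)"
    unfolding qo_def by (rule gen_vertex[OF finV finH loop2 _ hdef])
  have tmass: "(\<Sum>z\<in>V. mu_tail_vertex H w \<alpha> n x z) = 1 / real n" if x: "x \<in> V" for x
  proof -
    have "(\<Sum>z\<in>V. mu_tail_vertex H w \<alpha> n x z) = \<alpha> / real n * 1 + (1 - \<alpha>) / (real n * Wi x) * (\<Sum>z\<in>V. qi x z)"
      using tsum[OF x, of "\<lambda>_. 1"] by simp
    also have "\<dots> = 1 / real n" using qi_mass[of x] Wi_pos[OF x] npos by (simp add: field_simps)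
    finally show ?thesis .
  qed
  have hmass: "(\<Sum>z\<in>V. mu_head_vertex H w \<alpha> m x z) = 1 / real m" if x: "x \<in> V" for x
  proof -
    have "(\<Sum>z\<in>V. mu_head_vertex H w \<alpha> m x z) = \<alpha> / real m * 1 + (1 - \<alpha>) / (real m * Wo x) * (\<Sum>z\<in>V. qo x z)"
      using hsum[OF x, of "\<lambda>_. 1"] by simp
    also have "\<dots> = 1 / real m" using qo_mass[of x] Wo_pos[OF x] mpos by (simp add: field_simps)
    finally show ?thesis .
  qed
  have tnn: "mu_tail_vertex H w \<alpha> n x z \<ge> 0" if x: "x \<in> V" for x z
  proof -
    have "(1 - \<alpha>) / (real n * Wi x) \<ge> 0" using assms(7) Wi_pos[OF x] by simp
    then have nn: "0 \<le> (1 - \<alpha>) / (real n * Wi x) * qi x z" by (rule mult_nonneg_nonneg[OF _ qi_nn])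
    show ?thesis unfolding tform using nn assms(6) by (cases "z = x") simp_all
  qed
  have hnn: "mu_head_vertex H w \<alpha> m x z \<ge> 0" if x: "x \<in> V" for x z
  proof -
    have "(1 - \<alpha>) / (real m * Wo x) \<ge> 0" using assms(7) Wo_pos[OF x] by simp
    then have nn: "0 \<le> (1 - \<alpha>) / (real m * Wo x) * qo x z" by (rule mult_nonneg_nonneg[OF _ qo_nn])
    show ?thesis unfolding hform using nn assms(6) by (cases "z = x") simp_all
  qed
  have tf: "(\<Sum>z\<in>V. mu_tail_vertex H w \<alpha> n x z * f z) \<le> (1 - \<alpha>) / real n * dm" if x: "x \<in> A" for x
  proof -
    have xV: "x \<in> V" using x AV by blast
    have c: "(1 - \<alpha>) / (real n * Wi x) \<ge> 0" using assms(7) Wi_pos[OF xV] by simp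
    have "(\<Sum>z\<in>V. qi x z * f z) \<le> (\<Sum>z\<in>V. qi x z * dm)"
      by (rule sum_mono) (use qi_nn f_dm in \<open>auto intro: mult_left_mono\<close>)
    also have "\<dots> = Wi x * dm" by (simp add: sum_distrib_right[symmetric] qi_mass)
    finally have le: "(\<Sum>z\<in>V. qi x z * f z) \<le> Wi x * dm" .
    have "(\<Sum>z\<in>V. mu_tail_vertex H w \<alpha> n x z * f z) = (1 - \<alpha>) / (real n * Wi x) * (\<Sum>z\<in>V. qi x z * f z)"
      using tsum[OF xV, of f] fA[OF x] by simp
    also have "\<dots> \<le> (1 - \<alpha>) / (real n * Wi x) * (Wi x * dm)" using c le by (rule mult_left_mono[rotated])
    also have "\<dots> = (1 - \<alpha>) / real n * dm" using Wi_pos[OF xV] npos by (simp add: field_simps)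
    finally show ?thesis .
  qed
  have hf: "(\<Sum>z\<in>V. mu_head_vertex H w \<alpha> m y z * f z) \<ge> L / real m - (1 - \<alpha>) / real m * Cw H w h y"
    if y: "y \<in> B" for y
  proof -
    have yV: "y \<in> V" using y BV by blast
    define Gm where "Gm = Gamma_minus H w h y"
    define Gp where "Gp = Gamma_plus H w h y"
    define c1 where "c1 = C1 H w h y"
    define c2 where "c2 = C2 H w h y"
    have GoV: "Gamma_out H y \<subseteq> V" unfolding Gamma_out_def using sub by blast
    have Gm_def': "Gm = {z \<in> Gamma_out H y. f z < f y}" unfolding Gm_def Gamma_minus_def f_def ..
    have Gp_def': "Gp = {z \<in> Gamma_out H y. f z > f y}" unfolding Gp_def Gamma_plus_def f_def ..
    have GmV: "Gm \<subseteq> V" and GpV: "Gp \<subseteq> V" using GoV Gm_def' Gp_def' by auto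
    have finGm: "finite Gm" and finGp: "finite Gp" using GmV GpV finV finite_subset by auto
    have Cw_eq: "Cw H w h y = (c1 * (\<Sum>z\<in>Gm. qo y z) - c2 * (\<Sum>z\<in>Gp. qo y z)) / Wo y"
      unfolding Cw_def qo_def Wo_def c1_def c2_def Gm_def Gp_def by (rule refl)
    have tmb: "qo y z * (f z - f y) \<ge> (if z \<in> Gm then - (c1 * qo y z) else 0) + (if z \<in> Gp then c2 * qo y z else 0)"
      for z
    proof (cases "z \<in> Gm")
      case True
      then have "z \<notin> Gp" using Gm_def' Gp_def' by auto
      have "Gm \<noteq> {}" using True by blast
      then have "c1 = f y - Min (f ` Gm)" unfolding c1_def C1_def Gm_def[symmetric] f_def[symmetric] by simp
      moreover have "Min (f ` Gm) \<le> f z" using finGm True by simp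
      ultimately have "f z - f y \<ge> - c1" by simp
      then have "qo y z * (f z - f y) \<ge> qo y z * (- c1)" using qo_nn[of y z] by (rule mult_left_mono)
      then show ?thesis using True \<open>z \<notin> Gp\<close> by (simp add: mult.commute)
    next
      case False
      show ?thesis
      proof (cases "z \<in> Gp")
        case True
        have "Gp \<noteq> {}" using True by blast
        then have "c2 = Min (f ` Gp) - f y" unfolding c2_def C2_def Gp_def[symmetric] f_def[symmetric] by simp
        moreover have "Min (f ` Gp) \<le> f z" using finGp True by simp
        ultimately have "f z - f y \<ge> c2" by simp
        then have "qo y z * (f z - f y) \<ge> qo y z * c2" using qo_nn[of y z] by (rule mult_left_mono)
        then show ?thesis using True False by (simp add: mult.commute)
      next
        case False2: False
        show ?thesis
        proof (cases "z \<in> Gamma_out H y")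
          case True
          then have "f z = f y" using False False2 Gm_def' Gp_def' by auto
          then show ?thesis using False False2 by simp
        next
          case False3: False
          then have "{h'\<in>H. y \<in> fst h' \<and> z \<in> snd h'} = {}" unfolding Gamma_out_def by blast
          then have "qo y z = 0" unfolding qo_def by (metis sum.empty)
          then show ?thesis using False False2 by simp
        qed
      qed
    qed
    have "(\<Sum>z\<in>V. qo y z * (f z - f y)) \<ge> (\<Sum>z\<in>V. (if z \<in> Gm then - (c1 * qo y z) else 0) + (if z \<in> Gp then c2 * qo y z else 0))"
      by (rule sum_mono) (rule tmb)
    also have "(\<Sum>z\<in>V. (if z \<in> Gm then - (c1 * qo y z) else 0) + (if z \<in> Gp then c2 * qo y z else 0))
       = (\<Sum>z\<in>V \<inter> Gm. - (c1 * qo y z)) + (\<Sum>z\<in>V \<inter> Gp. c2 * qo y z)"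
      by (simp add: sum.distrib sum.inter_restrict[OF finV])
    also have "\<dots> = - (c1 * (\<Sum>z\<in>Gm. qo y z) - c2 * (\<Sum>z\<in>Gp. qo y z))"
      using GmV GpV by (simp add: Int_absorb1 sum_distrib_left sum_negf)
    also have "\<dots> = - (Wo y * Cw H w h y)" unfolding Cw_eq using Wo_pos[OF yV] by simp
    finally have k1: "(\<Sum>z\<in>V. qo y z * (f z - f y)) \<ge> - (Wo y * Cw H w h y)" .
    have "(\<Sum>z\<in>V. qo y z * (f z - f y)) = (\<Sum>z\<in>V. qo y z * f z) - Wo y * f y"
      by (simp add: right_diff_distrib sum_subtractf sum_distrib_right[symmetric] qo_mass)
    with k1 have key: "(\<Sum>z\<in>V. qo y z * f z) \<ge> Wo y * f y - Wo y * Cw H w h y" by simp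
    have c: "(1 - \<alpha>) / (real m * Wo y) \<ge> 0" using assms(7) Wo_pos[OF yV] by simp
    have "(\<Sum>z\<in>V. mu_head_vertex H w \<alpha> m y z * f z) = \<alpha> / real m * f y + (1 - \<alpha>) / (real m * Wo y) * (\<Sum>z\<in>V. qo y z * f z)"
      using hsum[OF yV, of f] by simp
    also have "\<dots> \<ge> \<alpha> / real m * f y + (1 - \<alpha>) / (real m * Wo y) * (Wo y * f y - Wo y * Cw H w h y)"
      using mult_left_mono[OF key c] by simp
    finally have "(\<Sum>z\<in>V. mu_head_vertex H w \<alpha> m y z * f z) \<ge> \<alpha> / real m * f y + (1 - \<alpha>) / (real m * Wo y) * (Wo y * f y - Wo y * Cw H w h y)" .
    also have "\<alpha> / real m * f y + (1 - \<alpha>) / (real m * Wo y) * (Wo y * f y - Wo y * Cw H w h y)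
       = f y / real m - (1 - \<alpha>) / real m * Cw H w h y"
      using Wo_pos[OF yV] mpos by (simp add: field_simps)
    finally have "(\<Sum>z\<in>V. mu_head_vertex H w \<alpha> m y z * f z) \<ge> f y / real m - (1 - \<alpha>) / real m * Cw H w h y" .
    moreover have "L / real m \<le> f y / real m" using L_le[OF y] mpos by (simp add: divide_right_mono)
    ultimately show ?thesis by simp
  qed
  define \<mu> where "\<mu> = mu_tail H w \<alpha> h"
  define \<nu> where "\<nu> = mu_head H w \<alpha> h"
  have \<mu>eq: "\<And>z. \<mu> z = (\<Sum>x\<in>A. mu_tail_vertex H w \<alpha> n x z)"
    unfolding \<mu>_def mu_tail_def A_def n_def by (rule refl)
  have \<nu>eq: "\<And>z. \<nu> z = (\<Sum>x\<in>B. mu_head_vertex H w \<alpha> m x z)"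
    unfolding \<nu>_def mu_head_def B_def m_def by (rule refl)
  have \<mu>sum: "(\<Sum>z\<in>V. \<mu> z * g z) = (\<Sum>x\<in>A. \<Sum>z\<in>V. mu_tail_vertex H w \<alpha> n x z * g z)" for g
    unfolding \<mu>eq sum_distrib_right by (rule sum.swap)
  have \<nu>sum: "(\<Sum>z\<in>V. \<nu> z * g z) = (\<Sum>x\<in>B. \<Sum>z\<in>V. mu_head_vertex H w \<alpha> m x z * g z)" for g
    unfolding \<nu>eq sum_distrib_right by (rule sum.swap)
  have \<mu>tot: "(\<Sum>z\<in>V. \<mu> z) = 1"
  proof -
    have "(\<Sum>z\<in>V. \<mu> z) = (\<Sum>z\<in>V. \<mu> z * (\<lambda>_. 1) z)" by simp
    also have "\<dots> = (\<Sum>x\<in>A. 1 / real n)" unfolding \<mu>sum using tmass AV by (intro sum.cong) auto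
    also have "\<dots> = 1" using npos n_def by simp
    finally show ?thesis .
  qed
  have \<nu>tot: "(\<Sum>z\<in>V. \<nu> z) = 1"
  proof -
    have "(\<Sum>z\<in>V. \<nu> z) = (\<Sum>z\<in>V. \<nu> z * (\<lambda>_. 1) z)" by simp
    also have "\<dots> = (\<Sum>x\<in>B. 1 / real m)" unfolding \<nu>sum using hmass BV by (intro sum.cong) auto
    also have "\<dots> = 1" using mpos m_def by simp
    finally show ?thesis .
  qed
  have \<mu>nn: "\<And>z. \<mu> z \<ge> 0" unfolding \<mu>eq using tnn AV by (intro sum_nonneg) auto
  have \<nu>nn: "\<And>z. \<nu> z \<ge> 0" unfolding \<nu>eq using hnn BV by (intro sum_nonneg) auto
  define X where "X = 1 / real m * (\<Sum>y\<in>B. Cw H w h y) + dm"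
  define S where "S = {(\<Sum>u\<in>V. \<Sum>v\<in>V. \<pi> u v * qdist H w u v) | \<pi>. coupling V \<mu> \<nu> \<pi>}"
  have cpl: "coupling V \<mu> \<nu> (\<lambda>u v. \<mu> u * \<nu> v)"
    unfolding coupling_def using \<mu>nn \<nu>nn \<mu>tot \<nu>tot
    by (simp add: sum_distrib_left[symmetric] sum_distrib_right[symmetric])
  have Sne: "S \<noteq> {}" unfolding S_def using cpl by blast
  have tailb: "(\<Sum>u\<in>V. \<mu> u * f u) \<le> (1 - \<alpha>) * dm"
  proof -
    have "(\<Sum>u\<in>V. \<mu> u * f u) \<le> (\<Sum>x\<in>A. (1 - \<alpha>) / real n * dm)"
      unfolding \<mu>sum by (rule sum_mono) (rule tf)
    also have "\<dots> = (1 - \<alpha>) * dm" using npos n_def by simp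
    finally show ?thesis .
  qed
  have headb: "(\<Sum>v\<in>V. \<nu> v * f v) \<ge> L - (1 - \<alpha>) / real m * (\<Sum>y\<in>B. Cw H w h y)"
  proof -
    have "(\<Sum>v\<in>V. \<nu> v * f v) \<ge> (\<Sum>y\<in>B. L / real m - (1 - \<alpha>) / real m * Cw H w h y)"
      unfolding \<nu>sum by (rule sum_mono) (rule hf)
    moreover have "(\<Sum>y\<in>B. L / real m - (1 - \<alpha>) / real m * Cw H w h y) = L - (1 - \<alpha>) / real m * (\<Sum>y\<in>B. Cw H w h y)"
      using mpos m_def by (simp add: sum_subtractf sum_distrib_left)
    ultimately show ?thesis by simp
  qed
  have lowS: "s \<ge> L - (1 - \<alpha>) * X" if sS: "s \<in> S" for s
  proof -
    obtain p where s: "s = (\<Sum>u\<in>V. \<Sum>v\<in>V. p u v * D u v)" and cp: "coupling V \<mu> \<nu> p"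
      using sS unfolding S_def D_def by blast
    have pnn: "\<And>u v. u \<in> V \<Longrightarrow> v \<in> V \<Longrightarrow> p u v \<ge> 0"
      and row: "\<And>u. u \<in> V \<Longrightarrow> (\<Sum>v\<in>V. p u v) = \<mu> u"
      and col: "\<And>v. v \<in> V \<Longrightarrow> (\<Sum>u\<in>V. p u v) = \<nu> v"
      using cp unfolding coupling_def by auto
    have "(\<Sum>u\<in>V. \<Sum>v\<in>V. p u v * (f v - f u)) \<le> (\<Sum>u\<in>V. \<Sum>v\<in>V. p u v * D u v)"
      by (intro sum_mono mult_left_mono f_lip pnn)
    moreover have "(\<Sum>u\<in>V. \<Sum>v\<in>V. p u v * (f v - f u)) = (\<Sum>u\<in>V. \<Sum>v\<in>V. p u v * f v) - (\<Sum>u\<in>V. \<Sum>v\<in>V. p u v * f u)"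
      by (simp add: right_diff_distrib sum_subtractf)
    moreover have "(\<Sum>u\<in>V. \<Sum>v\<in>V. p u v * f v) = (\<Sum>v\<in>V. \<nu> v * f v)"
    proof -
      have "(\<Sum>u\<in>V. \<Sum>v\<in>V. p u v * f v) = (\<Sum>v\<in>V. \<Sum>u\<in>V. p u v * f v)" by (rule sum.swap)
      also have "\<dots> = (\<Sum>v\<in>V. \<nu> v * f v)"
        by (rule sum.cong) (simp_all add: sum_distrib_right[symmetric] col)
      finally show ?thesis .
    qed
    moreover have "(\<Sum>u\<in>V. \<Sum>v\<in>V. p u v * f u) = (\<Sum>u\<in>V. \<mu> u * f u)"
      by (rule sum.cong) (simp_all add: sum_distrib_right[symmetric] row)
    ultimately have "s \<ge> (\<Sum>v\<in>V. \<nu> v * f v) - (\<Sum>u\<in>V. \<mu> u * f u)" using s by simp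
    then show ?thesis using tailb headb unfolding X_def by (simp add: algebra_simps)
  qed
  have Wge: "wasserstein V H w \<mu> \<nu> \<ge> L - (1 - \<alpha>) * X"
    unfolding wasserstein_def S_def[symmetric] by (rule cInf_greatest[OF Sne lowS])
  have "kappa V H w \<alpha> h = 1 - wasserstein V H w \<mu> \<nu> / L"
    unfolding kappa_def \<mu>_def \<nu>_def L_def ..
  also have "\<dots> \<le> 1 - (L - (1 - \<alpha>) * X) / L"
    using Wge Lpos by (simp add: divide_right_mono)
  also have "\<dots> = (1 - \<alpha>) / L * X" using Lpos by (simp add: field_simps)
  finally show ?thesis unfolding X_def L_def dm_def m_def B_def .
qed

end
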